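(* Fix an integer $n\ge1$. For $r>0$, let $X_r$ be the systematic-Poisson process on $(0,1)$ with parameters $r$ and $\lambda=rn$. Then $X_r$ converges weakly (in distribution, as point processes) to the systematic process on $(0,1)$ with sampling interval $c=1/n$, i.e. the random set $\{u+k/n:\ k=0,\dots,n-1\}$ with $u\sim\mathcal U(0,1/n)$, as $r\to\infty$.
   Context: $\mathrm{Gamma}(r,\lambda)$ is the Gamma distribution with shape $r$ and rate $\lambda$. $\mathrm{ForG}(r,\lambda)$ is the distribution on $[0,\infty)$ with PDF $\lambda\,\Gamma(r,\lambda x)/\Gamma(r+1)$, where $\Gamma(r,y)=\int_y^\infty t^{r-1}e^{-t}dt$. The systematic-Poisson process with parameters $r>0,\lambda>0$: $x_1\sim\mathrm{ForG}(r,\lambda)$, $x_i=x_{i-1}+J_i$ for $i\ge2$ with $J_2,J_3,\dots$ i.i.d. $\mathrm{Gamma}(r,\lambda)$ independent of $x_1$; the sample is the set of those $x_i$ in $(0,1)$. Weak convergence of point processes is convergence in distribution of the random counting measures (equivalently, weak convergence of finite-dimensional distributions of counts). *)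

theory Defs
  imports "HOL-Probability.Probability"
begin

definition upper_gamma :: "real \<Rightarrow> real \<Rightarrow> real" where
  "upper_gamma r y = (LBINT t:{y..}. t powr (r - 1) * exp (- t))"

definition gamma_density :: "real \<Rightarrow> real \<Rightarrow> real \<Rightarrow> real" where
  "gamma_density r l x = (if x > 0 then l powr r * x powr (r - 1) * exp (- l * x) / Gamma r else 0)"

definition forG_density :: "real \<Rightarrow> real \<Rightarrow> real \<Rightarrow> real" where
  "forG_density r l x = (if x \<ge> 0 then l * upper_gamma r (l * x) / Gamma (r + 1) else 0)"

text \<open>Joint law of (x_1, J_2, J_3, ...): coordinate 0 is x_1, coordinate i >= 1 is J_(i+1).\<close>
definition sysPoisson_measure :: "real \<Rightarrow> real \<Rightarrow> (nat \<Rightarrow> real) measure" where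
  "sysPoisson_measure r l =
     PiM UNIV (\<lambda>i. if i = 0 then density lborel (\<lambda>x. ennreal (forG_density r l x))
                   else density lborel (\<lambda>x. ennreal (gamma_density r l x)))"

definition sysPoisson_points :: "(nat \<Rightarrow> real) \<Rightarrow> real set" where
  "sysPoisson_points \<omega> = {x. \<exists>i. x = (\<Sum>j\<le>i. \<omega> j)} \<inter> {0<..<1}"

definition systematic_measure :: "nat \<Rightarrow> real measure" where
  "systematic_measure n = uniform_measure lborel {0<..<1 / real n}"

definition systematic_points :: "nat \<Rightarrow> real \<Rightarrow> real set" where
  "systematic_points n u = {u + real k / real n | k. k < n}"

text \<open>Weak convergence of point processes on (0,1), expressed through convergence of the
  finite-dimensional distributions of counts N(A_1),...,N(A_m) for Borel sets A_j in (0,1)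
  that are continuity sets of the limit process (a.s. no limit point on the boundary of A_j).
  Since counts are nat-valued, convergence in distribution of the count vector is
  convergence of all point probabilities.  A point process is given by a probability
  space M and a map P sending an outcome to its (finite) point set; N(A) = card (P w \<inter> A).\<close>
definition pp_weak_conv ::
  "'i filter \<Rightarrow> ('i \<Rightarrow> 'a measure) \<Rightarrow> ('i \<Rightarrow> 'a \<Rightarrow> real set) \<Rightarrow> 'b measure \<Rightarrow> ('b \<Rightarrow> real set) \<Rightarrow> bool"
  where
  "pp_weak_conv F M P L Q \<longleftrightarrow>
    (\<forall>(As :: real set list) (ks :: nat list).
       length ks = length As \<longrightarrow>
       (\<forall>A\<in>set As. A \<in> sets borel \<and> A \<subseteq> {0<..<1} \<and>
                   measure L {w \<in> space L. Q w \<inter> frontier A \<noteq> {}} = 0) \<longrightarrow>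
       ((\<lambda>i. measure (M i) {w \<in> space (M i). \<forall>j<length As. card (P i w \<inter> As ! j) = ks ! j})
         \<longlongrightarrow> measure L {w \<in> space L. \<forall>j<length As. card (Q w \<inter> As ! j) = ks ! j}) F)"

end

theory Submission
  imports Defs
begin

lemma Gamma_int_scaled:
  fixes a l :: real
  assumes a: "a > 0" and l: "l > 0"
  shows "(\<integral>\<^sup>+x. ennreal (indicator {0<..} x * x powr (a - 1) * exp (- l * x)) \<partial>lborel)
         = ennreal (Gamma a / l powr a)"
proof -
  have "(\<integral>\<^sup>+x. ennreal (indicator {0<..} x * x powr (a - 1) * exp (- l * x)) \<partial>lborel)
      = \<bar>1/l\<bar> * (\<integral>\<^sup>+x. ennreal (indicator {0<..} (0 + 1/l * x) * (0 + 1/l * x) powr (a - 1) * exp (- l * (0 + 1/l * x))) \<partial>lborel)"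
    by (rule nn_integral_real_affine) (use l in auto)
  also have "(\<lambda>x. ennreal (indicator {0<..} (0 + 1/l * x) * (0 + 1/l * x) powr (a - 1) * exp (- l * (0 + 1/l * x))))
      = (\<lambda>x. ennreal (l powr (1 - a)) * ennreal (indicator {0..} x * x powr (a - 1) / exp x))"
  proof
    fix x :: real
    show "ennreal (indicator {0<..} (0 + 1/l * x) * (0 + 1/l * x) powr (a - 1) * exp (- l * (0 + 1/l * x)))
      = ennreal (l powr (1 - a)) * ennreal (indicator {0..} x * x powr (a - 1) / exp x)"
    proof (cases "x > 0")
      case True
      have "(1/l * x) powr (a - 1) = l powr (1 - a) * x powr (a - 1)"
      proof -
        have "l powr (1 - a) = inverse (l powr (a - 1))"
          using powr_minus[of l "a - 1"] by simp
        then show ?thesis using True l by (simp add: powr_divide field_simps)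
      qed
      then show ?thesis using True l
        by (simp add: ennreal_mult'[symmetric] exp_minus field_simps)
    next
      case False
      then show ?thesis using l by (auto simp: indicator_def zero_less_mult_iff zero_less_divide_iff)
    qed
  qed
  also have "(\<integral>\<^sup>+x. ennreal (l powr (1 - a)) * ennreal (indicator {0..} x * x powr (a - 1) / exp x) \<partial>lborel)
      = ennreal (l powr (1 - a)) * ennreal (Gamma a)"
    by (subst nn_integral_cmult) (auto simp: Gamma_conv_nn_integral_real[OF a])
  finally show ?thesis using l a
    by (simp add: ennreal_mult'[symmetric] powr_diff field_simps Gamma_real_pos)
qed

lemma gd_nonneg: "r > 0 \<Longrightarrow> gamma_density r l x \<ge> 0"
  by (simp add: gamma_density_def Gamma_real_pos)

lemma gd_zero: "x \<le> 0 \<Longrightarrow> gamma_density r l x = 0"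
  by (simp add: gamma_density_def)

lemma gd_measurable[measurable]: "gamma_density r l \<in> borel_measurable borel"
  unfolding gamma_density_def by measurable

lemma gd_mult_nonneg: "r > 0 \<Longrightarrow> 0 \<le> gamma_density r l x * x ^ k"
  by (cases "x > 0") (auto simp: gd_zero gd_nonneg)

lemma gd_moment:
  fixes r l :: real and k :: nat
  assumes r: "r > 0" and l: "l > 0"
  shows "(\<integral>\<^sup>+x. ennreal (gamma_density r l x * x ^ k) \<partial>lborel) = ennreal (Gamma (r + real k) / (Gamma r * l ^ k))"
proof -
  have eq: "ennreal (gamma_density r l x * x ^ k)
     = ennreal (l powr r / Gamma r) * ennreal (indicator {0<..} x * x powr (r + real k - 1) * exp (- l * x))" for x
  proof (cases "x > 0")
    case True
    have "x powr (r - 1) * x ^ k = x powr (r + real k - 1)"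
      using True by (simp add: powr_realpow[symmetric] powr_add[symmetric] add_diff_eq diff_add_eq add.commute)
    then show ?thesis using True r l
      by (simp add: gamma_density_def ennreal_mult'[symmetric] Gamma_real_pos field_simps)
  next
    case False
    then show ?thesis by (simp add: gamma_density_def)
  qed
  have "(\<integral>\<^sup>+x. ennreal (gamma_density r l x * x ^ k) \<partial>lborel)
      = ennreal (l powr r / Gamma r) * (\<integral>\<^sup>+x. ennreal (indicator {0<..} x * x powr (r + real k - 1) * exp (- l * x)) \<partial>lborel)"
    unfolding eq by (rule nn_integral_cmult) measurable
  also have "\<dots> = ennreal (l powr r / Gamma r) * ennreal (Gamma (r + real k) / l powr (r + real k))"
    by (subst Gamma_int_scaled) (use r l in auto)
  also have "\<dots> = ennreal (Gamma (r + real k) / (Gamma r * l ^ k))"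
    using r l by (simp add: ennreal_mult'[symmetric] Gamma_real_pos powr_add powr_realpow field_simps)
  finally show ?thesis .
qed

lemma gd_integrable:
  fixes r l :: real and k :: nat
  assumes r: "r > 0" and l: "l > 0"
  shows "integrable lborel (\<lambda>x. gamma_density r l x * x ^ k)"
proof (rule integrableI_bounded)
  show "(\<lambda>x. gamma_density r l x * x ^ k) \<in> borel_measurable lborel" by measurable
  have "norm (gamma_density r l x * x ^ k) = gamma_density r l x * x ^ k" for x
    by (cases "x > 0") (auto simp: gd_zero gd_nonneg[OF r] abs_mult)
  then show "(\<integral>\<^sup>+x. ennreal (norm (gamma_density r l x * x ^ k)) \<partial>lborel) < \<infinity>"
    using gd_moment[OF r l, of k] by simp
qed

lemma gd_integral:
  fixes r l :: real and k :: nat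
  assumes r: "r > 0" and l: "l > 0"
  shows "(\<integral>x. gamma_density r l x * x ^ k \<partial>lborel) = Gamma (r + real k) / (Gamma r * l ^ k)"
proof -
  have "ennreal (\<integral>x. gamma_density r l x * x ^ k \<partial>lborel) = (\<integral>\<^sup>+x. ennreal (gamma_density r l x * x ^ k) \<partial>lborel)"
    by (rule nn_integral_eq_integral[symmetric])
      (use gd_integrable[OF r l] gd_mult_nonneg[OF r] in auto)
  also have "\<dots> = ennreal (Gamma (r + real k) / (Gamma r * l ^ k))" by (rule gd_moment[OF r l])
  finally show ?thesis
    using r l by (subst (asm) ennreal_inj) (auto simp: Gamma_real_pos gd_mult_nonneg intro!: integral_nonneg_AE AE_I2)
qed

lemma Gamma_plus1_pos: "(r::real) > 0 \<Longrightarrow> Gamma (r + 1) = r * Gamma r"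
  by (rule Gamma_plus1) (auto dest: nonpos_Ints_nonpos)

lemma Gamma_ne0: "(r::real) > 0 \<Longrightarrow> Gamma r \<noteq> 0"
  using Gamma_real_pos[of r] by linarith

lemma GM_prob: "r > 0 \<Longrightarrow> l > 0 \<Longrightarrow> prob_space (density lborel (\<lambda>x. ennreal (gamma_density r l x)))"
  apply (rule prob_spaceI)
  using gd_moment[of r l 0] Gamma_ne0[of r] by (auto simp: emeasure_density)

lemma gd_cheb:
  fixes r l \<eta> :: real
  assumes r: "r > 0" and l: "l > 0" and e: "\<eta> > 0"
  shows "emeasure (density lborel (\<lambda>x. ennreal (gamma_density r l x))) {x. \<eta> \<le> \<bar>x - r / l\<bar>}
           \<le> ennreal (r / (l^2 * \<eta>^2))"
proof -
  define \<mu> where "\<mu> = r / l"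
  define g where "g = gamma_density r l"
  have [measurable]: "g \<in> borel_measurable borel" unfolding g_def by measurable
  have i0: "integrable lborel g" and i1: "integrable lborel (\<lambda>x. g x * x)"
    and i2: "integrable lborel (\<lambda>x. g x * x^2)"
    unfolding g_def using gd_integrable[OF r l, of 0] gd_integrable[OF r l, of 1] gd_integrable[OF r l, of 2]
    by auto
  have I0: "(\<integral>x. g x \<partial>lborel) = 1" and I1: "(\<integral>x. g x * x \<partial>lborel) = r / l"
    and I2: "(\<integral>x. g x * x^2 \<partial>lborel) = (r + 1) * r / l^2"
  proof -
    have G1: "Gamma (r + 1) = r * Gamma r" by (rule Gamma_plus1_pos[OF r])
    have G2: "Gamma (r + 2) = (r + 1) * (r * Gamma r)"
      using Gamma_plus1_pos[of "r + 1"] r G1 by (simp add: add.assoc)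
    show "(\<integral>x. g x \<partial>lborel) = 1" unfolding g_def using gd_integral[OF r l, of 0] r Gamma_ne0[OF r] by simp
    show "(\<integral>x. g x * x \<partial>lborel) = r / l" unfolding g_def using gd_integral[OF r l, of 1] r l Gamma_ne0[OF r]
      by (simp add: G1)
    show "(\<integral>x. g x * x^2 \<partial>lborel) = (r + 1) * r / l^2" unfolding g_def using gd_integral[OF r l, of 2] r l Gamma_ne0[OF r]
      by (simp add: G2 numeral_2_eq_2 add.assoc)
  qed
  have "emeasure (density lborel (\<lambda>x. ennreal (g x))) {x. \<eta> \<le> \<bar>x - \<mu>\<bar>}
      = (\<integral>\<^sup>+x. ennreal (g x) * indicator {x. \<eta> \<le> \<bar>x - \<mu>\<bar>} x \<partial>lborel)"
    by (subst emeasure_density) auto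
  also have "\<dots> \<le> (\<integral>\<^sup>+x. ennreal ((g x * x^2 - 2 * \<mu> * (g x * x) + \<mu>^2 * g x) / \<eta>^2) \<partial>lborel)"
  proof (rule nn_integral_mono)
    fix x
    have gx: "g x \<ge> 0" unfolding g_def using gd_nonneg[OF r] by auto
    have eq: "(g x * x^2 - 2 * \<mu> * (g x * x) + \<mu>^2 * g x) / \<eta>^2 = g x * ((x - \<mu>)^2 / \<eta>^2)"
      by (simp add: power2_eq_square field_simps)
    show "ennreal (g x) * indicator {x. \<eta> \<le> \<bar>x - \<mu>\<bar>} x \<le> ennreal ((g x * x^2 - 2 * \<mu> * (g x * x) + \<mu>^2 * g x) / \<eta>^2)"
    proof (cases "\<eta> \<le> \<bar>x - \<mu>\<bar>")
      case True
      have "\<eta>^2 \<le> (x - \<mu>)^2" using True e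
        by (metis abs_le_square_iff abs_of_pos)
      then have "1 \<le> (x - \<mu>)^2 / \<eta>^2" using e by simp
      then have "g x * 1 \<le> g x * ((x - \<mu>)^2 / \<eta>^2)" using gx by (intro mult_left_mono) auto
      then show ?thesis using True unfolding eq by (simp add: ennreal_leI)
    qed (auto)
  qed
  also have "\<dots> = ennreal (\<integral>x. (g x * x^2 - 2 * \<mu> * (g x * x) + \<mu>^2 * g x) / \<eta>^2 \<partial>lborel)"
  proof (rule nn_integral_eq_integral)
    show "integrable lborel (\<lambda>x. (g x * x^2 - 2 * \<mu> * (g x * x) + \<mu>^2 * g x) / \<eta>^2)"
      using i0 i1 i2 by auto
    show "AE x in lborel. 0 \<le> (g x * x^2 - 2 * \<mu> * (g x * x) + \<mu>^2 * g x) / \<eta>^2"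
    proof (rule AE_I2)
      fix x
      have gx: "g x \<ge> 0" unfolding g_def using gd_nonneg[OF r] by auto
      have eq: "(g x * x^2 - 2 * \<mu> * (g x * x) + \<mu>^2 * g x) / \<eta>^2 = g x * ((x - \<mu>)^2 / \<eta>^2)"
        by (simp add: power2_eq_square field_simps)
      show "0 \<le> (g x * x^2 - 2 * \<mu> * (g x * x) + \<mu>^2 * g x) / \<eta>^2"
        unfolding eq using gx by simp
    qed
  qed
  also have "(\<integral>x. (g x * x^2 - 2 * \<mu> * (g x * x) + \<mu>^2 * g x) / \<eta>^2 \<partial>lborel)
      = ((\<integral>x. g x * x^2 \<partial>lborel) - 2 * \<mu> * (\<integral>x. g x * x \<partial>lborel) + \<mu>^2 * (\<integral>x. g x \<partial>lborel)) / \<eta>^2"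
    using i0 i1 i2 by (simp add: integral_diff integral_add)
  also have "\<dots> = r / (l^2 * \<eta>^2)"
    unfolding I0 I1 I2 \<mu>_def using r l e by (simp add: power2_eq_square field_simps)
  finally show ?thesis unfolding g_def \<mu>_def .
qed

definition tail :: "real \<Rightarrow> real \<Rightarrow> real \<Rightarrow> real" where
  "tail r l x = (\<integral>s. gamma_density r l s * indicator {x..} s \<partial>lborel)"

lemma upper_gamma_tail:
  fixes r l x :: real
  assumes r: "r > 0" and l: "l > 0" and x: "x \<ge> 0"
  shows "upper_gamma r (l * x) = Gamma r * tail r l x"
proof -
  have "upper_gamma r (l * x) = (\<integral>t. indicator {l*x..} t *\<^sub>R (t powr (r - 1) * exp (- t)) \<partial>lborel)"
    by (simp add: upper_gamma_def set_lebesgue_integral_def)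
  also have "\<dots> = \<bar>l\<bar> *\<^sub>R (\<integral>s. indicator {l*x..} (0 + l * s) *\<^sub>R ((0 + l * s) powr (r - 1) * exp (- (0 + l * s))) \<partial>lborel)"
    by (rule lborel_integral_real_affine) (use l in auto)
  also have "\<dots> = (\<integral>s. Gamma r * (gamma_density r l s * indicator {x..} s) \<partial>lborel)"
  proof -
    have "l * (indicator {l*x..} (0 + l * s) *\<^sub>R ((0 + l * s) powr (r - 1) * exp (- (0 + l * s))))
        = Gamma r * (gamma_density r l s * indicator {x..} s)" for s
    proof (cases "x \<le> s")
      case True
      show ?thesis
      proof (cases "s = 0")
        case True then show ?thesis using \<open>x \<le> s\<close> by (simp add: gamma_density_def)
      next
        case False
        then have s: "s > 0" using True x by auto
        have "l * (l * s) powr (r - 1) = l powr r * s powr (r - 1)"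
          using l s by (simp add: powr_mult powr_diff field_simps)
        have ind1: "indicator {l*x..} (0 + l * s) = (1::real)" using True l
          by (simp add: indicator_def mult_left_mono)
        have ind2: "indicator {x..} s = (1::real)" using True by simp
        show ?thesis unfolding ind1 ind2 using s Gamma_ne0[OF r]
          by (simp add: gamma_density_def) (metis (no_types, lifting) \<open>l * (l * s) powr (r - 1) = l powr r * s powr (r - 1)\<close> mult.assoc)
      qed
    next
      case False
      then show ?thesis using l by (auto simp: indicator_def)
    qed
    then have "(\<integral>s. l * (indicator {l*x..} (0 + l * s) *\<^sub>R ((0 + l * s) powr (r - 1) * exp (- (0 + l * s)))) \<partial>lborel)
        = (\<integral>s. Gamma r * (gamma_density r l s * indicator {x..} s) \<partial>lborel)" by simp
    moreover have "(\<integral>s. l * (indicator {l*x..} (0 + l * s) *\<^sub>R ((0 + l * s) powr (r - 1) * exp (- (0 + l * s)))) \<partial>lborel)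
        = \<bar>l\<bar> *\<^sub>R (\<integral>s. indicator {l*x..} (0 + l * s) *\<^sub>R ((0 + l * s) powr (r - 1) * exp (- (0 + l * s))) \<partial>lborel)"
      using l by (simp only: integral_mult_right_zero real_scaleR_def abs_of_pos)
    ultimately show ?thesis by simp
  qed
  also have "\<dots> = Gamma r * tail r l x"
    by (simp add: tail_def)
  finally show ?thesis .
qed

lemma forG_tail:
  fixes r l x :: real
  assumes r: "r > 0" and l: "l > 0" and x: "x \<ge> 0"
  shows "forG_density r l x = l / r * tail r l x"
  using x r Gamma_ne0[OF r]
  by (simp add: forG_density_def upper_gamma_tail[OF r l x] Gamma_plus1_pos[OF r])

lemma tail_integrable:
  assumes r: "r > 0" and l: "l > 0"
  shows "integrable lborel (\<lambda>s. gamma_density r l s * indicator {x..} s)"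
  using gd_integrable[OF r l, of 0] by (intro integrable_real_mult_indicator) auto

lemma tail_nn:
  assumes r: "r > 0" and l: "l > 0"
  shows "ennreal (tail r l x) = (\<integral>\<^sup>+s. ennreal (gamma_density r l s * indicator {x..} s) \<partial>lborel)"
  unfolding tail_def
  by (rule nn_integral_eq_integral[symmetric]) (use tail_integrable[OF r l] gd_nonneg[OF r] in auto)

lemma tail_nonneg: "r > 0 \<Longrightarrow> tail r l x \<ge> 0"
  unfolding tail_def by (intro integral_nonneg_AE AE_I2) (auto simp: gd_nonneg)

lemma forG_eq: "r > 0 \<Longrightarrow> l > 0 \<Longrightarrow> forG_density r l x = (if x \<ge> 0 then l / r * tail r l x else 0)"
  using forG_tail[of r l x] by (auto simp: forG_density_def)

lemma forG_nonneg: "r > 0 \<Longrightarrow> l > 0 \<Longrightarrow> forG_density r l x \<ge> 0"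
  by (simp add: forG_eq tail_nonneg)

lemma tail_antimono:
  assumes r: "r > 0" and l: "l > 0" and xy: "x \<le> y"
  shows "tail r l y \<le> tail r l x"
  unfolding tail_def
  by (rule integral_mono) (use tail_integrable[OF r l] xy gd_nonneg[OF r] in \<open>auto simp: indicator_def\<close>)

lemma tail_measurable[measurable]:
  assumes r: "r > 0" and l: "l > 0"
  shows "tail r l \<in> borel_measurable borel"
proof -
  have "(\<lambda>x. - tail r l x) \<in> borel_measurable borel"
    by (rule borel_measurable_mono) (auto simp: mono_def intro: tail_antimono[OF r l])
  then have "(\<lambda>x. - (- tail r l x)) \<in> borel_measurable borel" by measurable
  then show ?thesis by simp
qed

lemma forG_measurable[measurable]:
  assumes r: "r > 0" and l: "l > 0"
  shows "forG_density r l \<in> borel_measurable borel"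
proof -
  note tail_measurable[OF r l, measurable]
  have "(\<lambda>x. if x \<ge> 0 then l / r * tail r l x else 0) \<in> borel_measurable borel" by measurable
  moreover have "forG_density r l = (\<lambda>x. if x \<ge> 0 then l / r * tail r l x else 0)"
    using forG_eq[OF r l] by (intro ext) simp
  ultimately show ?thesis by simp
qed

lemma forG_total:
  assumes r: "r > 0" and l: "l > 0"
  shows "(\<integral>\<^sup>+x. ennreal (forG_density r l x) \<partial>lborel) = 1"
proof -
  define F where "F = (\<lambda>x s. ennreal (l / r * gamma_density r l s * (if 0 \<le> x \<and> x \<le> s then 1 else 0)))"
  have Fm: "case_prod F \<in> borel_measurable (lborel \<Otimes>\<^sub>M lborel)"
  proof -
    have "case_prod F \<in> borel_measurable (borel \<Otimes>\<^sub>M borel)"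
      unfolding F_def split_beta' by measurable
    moreover have S: "sets (lborel \<Otimes>\<^sub>M lborel) = sets ((borel :: real measure) \<Otimes>\<^sub>M (borel :: real measure))"
      by (intro sets_pair_measure_cong) auto
    have eq: "measurable ((lborel :: real measure) \<Otimes>\<^sub>M (lborel :: real measure)) (borel :: ennreal measure) = measurable (borel \<Otimes>\<^sub>M borel) borel"
      by (rule measurable_cong_sets[OF S refl])
    ultimately show ?thesis by (simp only: eq)
  qed
  have "ennreal (forG_density r l x) = (\<integral>\<^sup>+s. F x s \<partial>lborel)" for x
  proof (cases "x \<ge> 0")
    case True
    have "ennreal (forG_density r l x) = ennreal (l / r) * ennreal (tail r l x)"
      using forG_tail[OF r l True] r l by (simp only:) (rule ennreal_mult, auto simp: tail_nonneg)
    also have "\<dots> = ennreal (l / r) * (\<integral>\<^sup>+s. ennreal (gamma_density r l s * indicator {x..} s) \<partial>lborel)"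
      by (simp add: tail_nn[OF r l])
    also have "\<dots> = (\<integral>\<^sup>+s. ennreal (l / r) * ennreal (gamma_density r l s * indicator {x..} s) \<partial>lborel)"
      by (rule nn_integral_cmult[symmetric]) measurable
    also have "\<dots> = (\<integral>\<^sup>+s. F x s \<partial>lborel)"
    proof (intro nn_integral_cong)
      fix s :: real
      have "ennreal (l / r) * ennreal (gamma_density r l s * indicator {x..} s) = ennreal (l / r * (gamma_density r l s * indicator {x..} s))"
        by (rule ennreal_mult[symmetric]) (use r l gd_nonneg[OF r] in auto)
      also have "l / r * (gamma_density r l s * indicator {x..} s) = l / r * gamma_density r l s * (if 0 \<le> x \<and> x \<le> s then 1 else 0)"
        using True by (simp add: indicator_def)
      finally show "ennreal (l / r) * ennreal (gamma_density r l s * indicator {x..} s) = F x s"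
        unfolding F_def .
    qed
    finally show ?thesis .
  next
    case False
    then show ?thesis using r l by (simp add: forG_eq F_def)
  qed
  then have "(\<integral>\<^sup>+x. ennreal (forG_density r l x) \<partial>lborel) = (\<integral>\<^sup>+x. \<integral>\<^sup>+s. F x s \<partial>lborel \<partial>lborel)"
    by simp
  also have "\<dots> = (\<integral>\<^sup>+s. \<integral>\<^sup>+x. F x s \<partial>lborel \<partial>lborel)"
    by (rule lborel_pair.Fubini'[symmetric]) (rule Fm)
  also have "\<dots> = (\<integral>\<^sup>+s. ennreal (l / r) * ennreal (gamma_density r l s * s ^ 1) \<partial>lborel)"
  proof (rule nn_integral_cong)
    fix s :: real
    show "(\<integral>\<^sup>+x. F x s \<partial>lborel) = ennreal (l / r) * ennreal (gamma_density r l s * s ^ 1)"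
    proof (cases "s > 0")
      case True
      have "(\<integral>\<^sup>+x. F x s \<partial>lborel) = (\<integral>\<^sup>+x. ennreal (l / r * gamma_density r l s) * indicator {0..s} x \<partial>lborel)"
        by (intro nn_integral_cong) (auto simp: F_def indicator_def)
      also have "\<dots> = ennreal (l / r * gamma_density r l s) * emeasure lborel {0..s}"
        by (rule nn_integral_cmult_indicator) auto
      also have "\<dots> = ennreal (l / r) * ennreal (gamma_density r l s * s ^ 1)"
        using True r l gd_nonneg[OF r, of l s] by (simp add: ennreal_mult'[symmetric] mult.assoc)
      finally show ?thesis .
    next
      case False
      then have "\<And>x. F x s = 0" by (auto simp: F_def gd_zero)
      then show ?thesis using False by (simp add: gd_zero)
    qed
  qed
  also have "\<dots> = ennreal (l / r) * (\<integral>\<^sup>+s. ennreal (gamma_density r l s * s ^ 1) \<partial>lborel)"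
    by (rule nn_integral_cmult) measurable
  also have "\<dots> = 1"
  proof -
    have EQ: "l / r * (Gamma (r + real 1) / (Gamma r * l ^ 1)) = 1"
      using r l Gamma_ne0[OF r] by (simp add: Gamma_plus1_pos)
    show ?thesis
      by (simp only: gd_moment[OF r l]) (subst ennreal_mult'[symmetric], use r l in simp, simp only: EQ ennreal_1)
  qed
  finally show ?thesis .
qed

lemma FM_prob: "r > 0 \<Longrightarrow> l > 0 \<Longrightarrow> prob_space (density lborel (\<lambda>x. ennreal (forG_density r l x)))"
  apply (rule prob_spaceI)
  using forG_total[of r l] by (auto simp: emeasure_density)

lemma forG_integrable: "r > 0 \<Longrightarrow> l > 0 \<Longrightarrow> integrable lborel (forG_density r l)"
proof (rule integrableI_bounded)
  assume r: "r > 0" and l: "l > 0"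
  show "forG_density r l \<in> borel_measurable lborel" using forG_measurable[OF r l] by simp
  have "(\<lambda>x. ennreal (norm (forG_density r l x))) = (\<lambda>x. ennreal (forG_density r l x))"
    using forG_nonneg[OF r l] by (intro ext) simp
  then show "(\<integral>\<^sup>+x. ennreal (norm (forG_density r l x)) \<partial>lborel) < \<infinity>"
    using forG_total[OF r l] by simp
qed

lemma FM_measure:
  assumes r: "r > 0" and l: "l > 0" and C: "C \<in> sets borel"
  shows "measure (density lborel (\<lambda>x. ennreal (forG_density r l x))) C = (\<integral>x. forG_density r l x * indicator C x \<partial>lborel)"
proof -
  note forG_measurable[OF r l, measurable]
  have "emeasure (density lborel (\<lambda>x. ennreal (forG_density r l x))) C = (\<integral>\<^sup>+x. ennreal (forG_density r l x * indicator C x) \<partial>lborel)"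
  proof -
    have "emeasure (density lborel (\<lambda>x. ennreal (forG_density r l x))) C = (\<integral>\<^sup>+x. ennreal (forG_density r l x) * indicator C x \<partial>lborel)"
      by (rule emeasure_density) (use C in auto)
    also have "\<dots> = (\<integral>\<^sup>+x. ennreal (forG_density r l x * indicator C x) \<partial>lborel)"
      by (intro nn_integral_cong) (simp split: split_indicator)
    finally show ?thesis .
  qed
  also have "\<dots> = ennreal (\<integral>x. forG_density r l x * indicator C x \<partial>lborel)"
    by (rule nn_integral_eq_integral) (use forG_integrable[OF r l] forG_nonneg[OF r l] C in \<open>auto intro!: integrable_real_mult_indicator\<close>)
  finally have E: "emeasure (density lborel (\<lambda>x. ennreal (forG_density r l x))) C = ennreal (\<integral>x. forG_density r l x * indicator C x \<partial>lborel)" .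
  have "(\<integral>x. forG_density r l x * indicator C x \<partial>lborel) \<ge> 0"
    by (intro integral_nonneg_AE AE_I2) (simp add: forG_nonneg[OF r l])
  then show ?thesis using E by (simp add: measure_def)
qed

abbreviation GMm :: "real \<Rightarrow> real \<Rightarrow> real measure" where
  "GMm r l \<equiv> density lborel (\<lambda>x. ennreal (gamma_density r l x))"

abbreviation FMm :: "real \<Rightarrow> real \<Rightarrow> real measure" where
  "FMm r l \<equiv> density lborel (\<lambda>x. ennreal (forG_density r l x))"

lemma tail_measure:
  assumes r: "r > 0" and l: "l > 0"
  shows "tail r l x = measure (GMm r l) {x..}"
proof -
  have "emeasure (GMm r l) {x..} = (\<integral>\<^sup>+s. ennreal (gamma_density r l s) * indicator {x..} s \<partial>lborel)"
    by (rule emeasure_density) auto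
  also have "\<dots> = (\<integral>\<^sup>+s. ennreal (gamma_density r l s * indicator {x..} s) \<partial>lborel)"
    by (intro nn_integral_cong) (simp split: split_indicator)
  also have "\<dots> = ennreal (tail r l x)" by (rule tail_nn[OF r l, symmetric])
  finally show ?thesis using tail_nonneg[OF r, of l x] by (simp add: measure_def)
qed

lemma GM_meas_le:
  assumes r: "r > 0" and l: "l > 0" and e: "\<eta> > 0" and A: "A \<in> sets borel"
    and sub: "A \<subseteq> {x. \<eta> \<le> \<bar>x - r / l\<bar>}"
  shows "measure (GMm r l) A \<le> r / (l^2 * \<eta>^2)"
proof -
  interpret prob_space "GMm r l" by (rule GM_prob[OF r l])
  have "ennreal (measure (GMm r l) A) = emeasure (GMm r l) A" by (simp add: emeasure_eq_measure)
  also have "\<dots> \<le> emeasure (GMm r l) {x. \<eta> \<le> \<bar>x - r / l\<bar>}"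
    by (rule emeasure_mono[OF sub]) auto
  also have "\<dots> \<le> ennreal (r / (l^2 * \<eta>^2))" by (rule gd_cheb[OF r l e])
  finally show ?thesis using r l e by (subst (asm) ennreal_le_iff) auto
qed

lemma tail_le1:
  assumes r: "r > 0" and l: "l > 0"
  shows "tail r l x \<le> 1"
proof -
  interpret prob_space "GMm r l" by (rule GM_prob[OF r l])
  show ?thesis by (simp add: tail_measure[OF r l])
qed

lemma cheb_arith: "r > 0 \<Longrightarrow> r / ((r * n)^2 * e^2) = 1 / (r * n^2 * e^2)" for r n e :: real
proof -
  assume r: "r > 0"
  have "(r * n)^2 * e^2 = r * (r * n^2 * e^2)" by (simp add: power_mult_distrib power2_eq_square)
  then have "r / ((r * n)^2 * e^2) = r / (r * (r * n^2 * e^2))" by (simp only:)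
  also have "\<dots> = 1 / (r * n^2 * e^2)" using r by (simp add: divide_simps)
  finally show ?thesis .
qed

lemma tail_hi:
  fixes n r x :: real
  assumes r: "r > 0" and n: "n > 0" and x: "x > 1 / n"
  shows "tail r (r * n) x \<le> 1 / (r * n^2 * (x - 1/n)^2)"
proof -
  have l: "r * n > 0" using r n by simp
  have "tail r (r * n) x = measure (GMm r (r * n)) {x..}" by (rule tail_measure[OF r l])
  also have "\<dots> \<le> r / ((r * n)^2 * (x - 1/n)^2)"
  proof (rule GM_meas_le[OF r l])
    show "x - 1/n > 0" using x by simp
    show "{x..} \<subseteq> {y. x - 1 / n \<le> \<bar>y - r / (r * n)\<bar>}" using r x by auto
  qed auto
  also have "\<dots> = 1 / (r * n^2 * (x - 1/n)^2)" using r by (rule cheb_arith)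
  finally show ?thesis .
qed

lemma tail_lo:
  fixes n r x :: real
  assumes r: "r > 0" and n: "n > 0" and x: "x < 1 / n"
  shows "tail r (r * n) x \<ge> 1 - 1 / (r * n^2 * (1/n - x)^2)"
proof -
  have l: "r * n > 0" using r n by simp
  interpret prob_space "GMm r (r * n)" by (rule GM_prob[OF r l])
  have "measure (GMm r (r * n)) {..<x} \<le> r / ((r * n)^2 * (1/n - x)^2)"
  proof (rule GM_meas_le[OF r l])
    show "1/n - x > 0" using x by simp
    show "{..<x} \<subseteq> {y. 1 / n - x \<le> \<bar>y - r / (r * n)\<bar>}" using r x by auto
  qed auto
  moreover have "measure (GMm r (r * n)) {x..} = 1 - measure (GMm r (r * n)) {..<x}"
  proof -
    have "{x..} = space (GMm r (r * n)) - {..<x}" by auto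
    then show ?thesis using prob_compl[of "{..<x}"] by simp
  qed
  moreover have "r / ((r * n)^2 * (1/n - x)^2) = 1 / (r * n^2 * (1/n - x)^2)"
    using r by (rule cheb_arith)
  ultimately show ?thesis using tail_measure[OF r l, of x] by simp
qed

lemma inv_lim: "c > 0 \<Longrightarrow> ((\<lambda>r::real. 1 / (r * c)) \<longlongrightarrow> 0) at_top"
proof -
  assume c: "c > 0"
  have "filterlim (\<lambda>r::real. c * r) at_top at_top"
    by (rule filterlim_tendsto_pos_mult_at_top[OF tendsto_const c filterlim_ident])
  then have "((\<lambda>r::real. inverse (c * r)) \<longlongrightarrow> 0) at_top" by (rule tendsto_inverse_0_at_top)
  then show ?thesis by (simp add: divide_inverse mult.commute)
qed

lemma forG_lim:
  fixes n x :: real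
  assumes n: "n > 0" and x0: "x \<noteq> 0" and x1: "x \<noteq> 1 / n"
  shows "((\<lambda>r. forG_density r (r * n) x) \<longlongrightarrow> n * indicator {0<..<1/n} x) at_top"
proof -
  have ev: "eventually (\<lambda>r. forG_density r (r * n) x = (if x \<ge> 0 then n * tail r (r * n) x else 0)) at_top"
    using eventually_gt_at_top[of 0]
  proof eventually_elim
    case (elim r) then show ?case using n by (simp add: forG_eq)
  qed
  consider "x < 0" | "0 < x" "x < 1/n" | "x > 1/n" using x0 x1 by linarith
  then show ?thesis
  proof cases
    case 1
    have "((\<lambda>r. (if x \<ge> 0 then n * tail r (r * n) x else 0)) \<longlongrightarrow> n * indicator {0<..<1/n} x) at_top"
      using 1 by simp
    then show ?thesis by (subst tendsto_cong[OF ev])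
  next
    case 2
    define c where "c = n^2 * (1/n - x)^2"
    have c: "c > 0" using 2 n by (simp add: c_def)
    have "((\<lambda>r. tail r (r * n) x) \<longlongrightarrow> 1) at_top"
    proof (rule tendsto_sandwich)
      show "eventually (\<lambda>r. 1 - 1 / (r * c) \<le> tail r (r * n) x) at_top"
        using eventually_gt_at_top[of 0] by eventually_elim (use tail_lo n 2 in \<open>simp add: c_def mult.assoc\<close>)
      show "eventually (\<lambda>r. tail r (r * n) x \<le> 1) at_top"
        using eventually_gt_at_top[of 0] by eventually_elim (use tail_le1 n in simp)
      show "((\<lambda>r. 1 - 1 / (r * c)) \<longlongrightarrow> 1) at_top"
        using tendsto_diff[OF tendsto_const inv_lim[OF c], of 1] by simp
    qed simp
    then have "((\<lambda>r. n * tail r (r * n) x) \<longlongrightarrow> n * 1) at_top" by (rule tendsto_mult_left)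
    then have "((\<lambda>r. (if x \<ge> 0 then n * tail r (r * n) x else 0)) \<longlongrightarrow> n * indicator {0<..<1/n} x) at_top"
      using 2 by simp
    then show ?thesis by (subst tendsto_cong[OF ev])
  next
    case 3
    define c where "c = n^2 * (x - 1/n)^2"
    have c: "c > 0" using 3 n by (simp add: c_def)
    have "((\<lambda>r. tail r (r * n) x) \<longlongrightarrow> 0) at_top"
    proof (rule tendsto_sandwich)
      show "eventually (\<lambda>r. tail r (r * n) x \<le> 1 / (r * c)) at_top"
        using eventually_gt_at_top[of 0] by eventually_elim (use tail_hi n 3 in \<open>simp add: c_def mult.assoc\<close>)
      show "eventually (\<lambda>r. 0 \<le> tail r (r * n) x) at_top"
        using eventually_gt_at_top[of 0] by eventually_elim (use tail_nonneg in simp)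
      show "((\<lambda>r. 1 / (r * c)) \<longlongrightarrow> 0) at_top" by (rule inv_lim[OF c])
    qed simp
    then have "((\<lambda>r. n * tail r (r * n) x) \<longlongrightarrow> n * 0) at_top" by (rule tendsto_mult_left)
    moreover have "0 \<le> x" using 3 n by (smt (verit) divide_pos_pos)
    moreover have "x \<notin> {0<..<1/n}" using 3 by auto
    ultimately have "((\<lambda>r. (if x \<ge> 0 then n * tail r (r * n) x else 0)) \<longlongrightarrow> n * indicator {0<..<1/n} x) at_top"
      by simp
    then show ?thesis by (subst tendsto_cong[OF ev])
  qed
qed

lemma forG_bound:
  assumes r: "r > 0" and n: "n > 0"
  shows "forG_density r (r * n) x \<le> n"
proof -
  have "n * tail r (r * n) x \<le> n * 1" using tail_le1[of r "r * n" x] r n by (intro mult_left_mono) auto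
  then show ?thesis using r n by (simp add: forG_eq)
qed

lemma forG_conv_D:
  fixes n :: real
  assumes n: "n > 0" and D: "D \<in> sets borel" and Dsub: "D \<subseteq> {..2/n}"
  shows "((\<lambda>r. measure (FMm r (r * n)) D) \<longlongrightarrow> n * measure lborel ({0<..<1/n} \<inter> D)) at_top"
proof -
  define s where "s = (\<lambda>r x. if r > 0 then forG_density r (r * n) x * indicator D x else 0)"
  define w where "w = (\<lambda>x. n * indicator {0..2/n} x :: real)"
  define f where "f = (\<lambda>x. n * indicator {0<..<1/n} x * indicator D x :: real)"
  have ev: "eventually (\<lambda>r. measure (FMm r (r * n)) D = (\<integral>x. s r x \<partial>lborel)) at_top"
    using eventually_gt_at_top[of 0]
  proof eventually_elim
    case (elim r) then show ?case using n D by (simp add: s_def FM_measure)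
  qed
  have "((\<lambda>r. \<integral>x. s r x \<partial>lborel) \<longlongrightarrow> (\<integral>x. f x \<partial>lborel)) at_top"
  proof (rule integral_dominated_convergence_at_top[where w = w])
    show "f \<in> borel_measurable lborel" unfolding f_def using D by measurable
    show "s t \<in> borel_measurable lborel" for t
    proof (cases "t > 0")
      case True
      note forG_measurable[of t "t * n", measurable]
      show ?thesis using True n D unfolding s_def by simp
    next
      case False then show ?thesis unfolding s_def by simp
    qed
    show "integrable lborel w" unfolding w_def by (intro integrable_mult_right integrable_real_indicator) (auto simp: emeasure_lborel_Icc_eq)
    have "AE x in lborel. x \<noteq> 0" by (rule AE_lborel_singleton)
    moreover have "AE x in lborel. x \<noteq> 1 / n" by (rule AE_lborel_singleton)
    ultimately show "AE x in lborel. ((\<lambda>r. s r x) \<longlongrightarrow> f x) at_top"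
    proof eventually_elim
      case (elim x)
      have e2: "eventually (\<lambda>r. s r x = forG_density r (r * n) x * indicator D x) at_top"
        using eventually_gt_at_top[of 0] by eventually_elim (simp add: s_def)
      have "((\<lambda>r. forG_density r (r * n) x * indicator D x) \<longlongrightarrow> f x) at_top"
        unfolding f_def by (intro tendsto_mult_right forG_lim n elim)
      then show ?case by (subst tendsto_cong[OF e2])
    qed
    show "eventually (\<lambda>r. AE x in lborel. norm (s r x) \<le> w x) at_top"
      using eventually_gt_at_top[of 0]
    proof eventually_elim
      case (elim r)
      show ?case
      proof (rule AE_I2)
        fix x
        have "0 \<le> forG_density r (r * n) x" using forG_nonneg[of r "r * n" x] elim n by simp
        moreover have "forG_density r (r * n) x \<le> n" by (rule forG_bound[OF elim n])
        moreover have "x < 0 \<Longrightarrow> forG_density r (r * n) x = 0" using elim n by (simp add: forG_eq)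
        ultimately show "norm (s r x) \<le> w x"
          using elim Dsub unfolding s_def w_def by (auto simp: indicator_def)
      qed
    qed
  qed
  moreover have "(\<integral>x. f x \<partial>lborel) = n * measure lborel ({0<..<1/n} \<inter> D)"
  proof -
    have "(\<lambda>x. f x) = (\<lambda>x. n * indicator ({0<..<1/n} \<inter> D) x)"
      unfolding f_def by (auto simp: indicator_def)
    then show ?thesis by simp
  qed
  ultimately show ?thesis by (subst tendsto_cong[OF ev]) simp
qed

lemma forG_conv:
  fixes n :: real
  assumes n: "n > 0" and C: "C \<in> sets borel"
  shows "((\<lambda>r. measure (FMm r (r * n)) C) \<longlongrightarrow> measure (uniform_measure lborel {0<..<1/n}) C) at_top"
proof -
  have lam: "measure lborel {0<..<1/n} = 1 / n" using n by simp
  have U: "measure (uniform_measure lborel {0<..<1/n}) C = n * measure lborel ({0<..<1/n} \<inter> C)"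
    using n C by (subst measure_uniform_measure) (auto simp: lam)
  have L1: "((\<lambda>r. measure (FMm r (r * n)) (C \<inter> {..2/n})) \<longlongrightarrow> n * measure lborel ({0<..<1/n} \<inter> (C \<inter> {..2/n}))) at_top"
    by (rule forG_conv_D) (use n C in auto)
  have L2: "((\<lambda>r. measure (FMm r (r * n)) {..2/n}) \<longlongrightarrow> n * measure lborel ({0<..<1/n} \<inter> {..2/n})) at_top"
    by (rule forG_conv_D) (use n in auto)
  have "{0<..<1/n} \<inter> {..2/n} = {0<..<1/n}" using n by (auto simp: field_simps)
  then have L2': "((\<lambda>r. 1 - measure (FMm r (r * n)) {..2/n}) \<longlongrightarrow> 0) at_top"
    using tendsto_diff[OF tendsto_const L2, of 1] n by (simp add: lam)
  have "((\<lambda>r. measure (FMm r (r * n)) (C \<inter> {2/n<..})) \<longlongrightarrow> 0) at_top"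
  proof (rule tendsto_sandwich[OF _ _ tendsto_const L2'])
    show "eventually (\<lambda>r. 0 \<le> measure (FMm r (r * n)) (C \<inter> {2/n<..})) at_top" by simp
    show "eventually (\<lambda>r. measure (FMm r (r * n)) (C \<inter> {2/n<..}) \<le> 1 - measure (FMm r (r * n)) {..2/n}) at_top"
      using eventually_gt_at_top[of 0]
    proof eventually_elim
      case (elim r)
      interpret prob_space "FMm r (r * n)" by (rule FM_prob) (use elim n in auto)
      have "measure (FMm r (r * n)) (C \<inter> {2/n<..}) \<le> measure (FMm r (r * n)) (space (FMm r (r * n)) - {..2/n})"
        by (rule finite_measure_mono) (use C in auto)
      also have "\<dots> = 1 - measure (FMm r (r * n)) {..2/n}" by (subst prob_compl) auto
      finally show ?case .
    qed
  qed
  with L1 have "((\<lambda>r. measure (FMm r (r * n)) (C \<inter> {..2/n}) + measure (FMm r (r * n)) (C \<inter> {2/n<..}))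
       \<longlongrightarrow> n * measure lborel ({0<..<1/n} \<inter> (C \<inter> {..2/n})) + 0) at_top"
    by (intro tendsto_add)
  moreover have "eventually (\<lambda>r. measure (FMm r (r * n)) C = measure (FMm r (r * n)) (C \<inter> {..2/n}) + measure (FMm r (r * n)) (C \<inter> {2/n<..})) at_top"
    using eventually_gt_at_top[of 0]
  proof eventually_elim
    case (elim r)
    interpret prob_space "FMm r (r * n)" by (rule FM_prob) (use elim n in auto)
    have "C = (C \<inter> {..2/n}) \<union> (C \<inter> {2/n<..})" by auto
    then have "measure (FMm r (r * n)) C = measure (FMm r (r * n)) ((C \<inter> {..2/n}) \<union> (C \<inter> {2/n<..}))" by simp
    also have "\<dots> = measure (FMm r (r * n)) (C \<inter> {..2/n}) + measure (FMm r (r * n)) (C \<inter> {2/n<..})"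
      by (rule measure_Union) (use C in auto)
    finally show ?case .
  qed
  moreover have "{0<..<1/n} \<inter> (C \<inter> {..2/n}) = {0<..<1/n} \<inter> C" using n by (auto simp: field_simps)
  ultimately show ?thesis unfolding U by (subst tendsto_cong) auto
qed

definition AL :: "(nat \<Rightarrow> 'b) \<Rightarrow> 'b set \<Rightarrow> nat \<Rightarrow> bool" where
  "AL g A k \<longleftrightarrow> (\<exists>I. finite I \<and> card I = k \<and> inj_on g I \<and> (\<forall>i\<in>I. g i \<in> A))"

lemma AL_iff: "AL g A k \<longleftrightarrow> (infinite (range g \<inter> A) \<or> k \<le> card (range g \<inter> A))"
proof
  assume "AL g A k"
  then obtain I where I: "finite I" "card I = k" "inj_on g I" "\<forall>i\<in>I. g i \<in> A"
    unfolding AL_def by blast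
  show "infinite (range g \<inter> A) \<or> k \<le> card (range g \<inter> A)"
  proof (cases "finite (range g \<inter> A)")
    case True
    have "g ` I \<subseteq> range g \<inter> A" using I by auto
    then have "card (g ` I) \<le> card (range g \<inter> A)" using True by (rule card_mono[rotated])
    then show ?thesis using I by (simp add: card_image)
  qed simp
next
  assume H: "infinite (range g \<inter> A) \<or> k \<le> card (range g \<inter> A)"
  obtain Y where Y: "finite Y" "card Y = k" "Y \<subseteq> range g \<inter> A"
  proof (cases "finite (range g \<inter> A)")
    case True
    then have "k \<le> card (range g \<inter> A)" using H by simp
    then show ?thesis using that obtain_subset_with_card_n by metis
  next
    case False
    then show ?thesis using that infinite_arbitrarily_large by metis
  qed
  define I where "I = inv_into UNIV g ` Y"
  have gI: "\<And>y. y \<in> Y \<Longrightarrow> g (inv_into UNIV g y) = y" using Y(3) by (auto intro: f_inv_into_f)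
  have inj1: "inj_on (inv_into UNIV g) Y" by (rule inj_on_inv_into) (use Y(3) in auto)
  have "finite I" using Y unfolding I_def by simp
  moreover have "card I = k" unfolding I_def using card_image[OF inj1] Y by simp
  moreover have "inj_on g I" unfolding I_def inj_on_def using gI by auto
  moreover have "\<forall>i\<in>I. g i \<in> A" unfolding I_def using gI Y(3) by auto
  ultimately show "AL g A k" unfolding AL_def by blast
qed

lemma card_iff_AL:
  "card (range g \<inter> A) = k \<longleftrightarrow> (AL g A k \<and> \<not> AL g A (Suc k)) \<or> (k = 0 \<and> (\<forall>m. AL g A m))"
  unfolding AL_iff by (cases "finite (range g \<inter> A)") (auto dest: spec[of _ "Suc (card (range g \<inter> A))"])

lemma AL_alt: "AL g A k \<longleftrightarrow> (\<exists>I\<in>{I. finite I \<and> card I = k}. (\<forall>i\<in>I. \<forall>j\<in>I. i \<noteq> j \<longrightarrow> g i \<noteq> g j) \<and> (\<forall>i\<in>I. g i \<in> A))"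
  unfolding AL_def inj_on_def by blast

lemma AL_meas:
  fixes f :: "nat \<Rightarrow> 'a \<Rightarrow> real"
  assumes f[measurable]: "\<And>i. f i \<in> borel_measurable N" and A[measurable]: "A \<in> sets borel"
  shows "{\<omega> \<in> space N. AL (\<lambda>i. f i \<omega>) A k} \<in> sets N"
proof -
  have cI: "countable {I::nat set. finite I \<and> card I = k}"
    by (rule countable_subset[OF _ countable_Collect_finite]) auto
  have fin: "{\<omega> \<in> space N. (\<forall>i\<in>I. \<forall>j\<in>I. i \<noteq> j \<longrightarrow> f i \<omega> \<noteq> f j \<omega>) \<and> (\<forall>i\<in>I. f i \<omega> \<in> A)} \<in> sets N"
    if "finite I" for I
    using that by measurable
  have "{\<omega> \<in> space N. AL (\<lambda>i. f i \<omega>) A k}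
      = (\<Union>I\<in>{I. finite I \<and> card I = k}. {\<omega> \<in> space N. (\<forall>i\<in>I. \<forall>j\<in>I. i \<noteq> j \<longrightarrow> f i \<omega> \<noteq> f j \<omega>) \<and> (\<forall>i\<in>I. f i \<omega> \<in> A)})"
    unfolding AL_alt by blast
  also have "\<dots> \<in> sets N"
    by (rule sets.countable_UN''[OF cI]) (use fin in auto)
  finally show ?thesis .
qed

lemma card_meas:
  fixes f :: "nat \<Rightarrow> 'a \<Rightarrow> real"
  assumes f[measurable]: "\<And>i. f i \<in> borel_measurable N" and A[measurable]: "A \<in> sets borel"
  shows "Measurable.pred N (\<lambda>\<omega>. card (range (\<lambda>i. f i \<omega>) \<inter> A) = k)"
proof -
  have [measurable]: "Measurable.pred N (\<lambda>\<omega>. AL (\<lambda>i. f i \<omega>) A m)" for m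
    using AL_meas[where k=m, OF f A] by (simp add: pred_def)
  show ?thesis unfolding card_iff_AL by measurable
qed

lemma SP_space: "space (sysPoisson_measure r l) = UNIV"
proof -
  have "(\<lambda>i::nat. space (if i = 0 then FMm r l else GMm r l)) = (\<lambda>i. UNIV)" by (intro ext) simp
  then show ?thesis by (simp add: sysPoisson_measure_def space_PiM)
qed

lemma SP_comp[measurable]: "(\<lambda>w. w j) \<in> borel_measurable (sysPoisson_measure r l)"
proof -
  have "(\<lambda>w. w j) \<in> measurable (sysPoisson_measure r l)
      ((\<lambda>i. if i = 0 then density lborel (\<lambda>x. ennreal (forG_density r l x))
                   else density lborel (\<lambda>x. ennreal (gamma_density r l x))) j)"
    unfolding sysPoisson_measure_def by (rule measurable_component_singleton) simp
  moreover have "measurable (sysPoisson_measure r l) ((\<lambda>i. if i = 0 then density lborel (\<lambda>x. ennreal (forG_density r l x))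
                   else density lborel (\<lambda>x. ennreal (gamma_density r l x))) j) = measurable (sysPoisson_measure r l) borel"
    by (rule measurable_cong_sets) auto
  ultimately show ?thesis by simp
qed

lemma SP_prob: "r > 0 \<Longrightarrow> l > 0 \<Longrightarrow> prob_space (sysPoisson_measure r l)"
  unfolding sysPoisson_measure_def by (rule prob_space_PiM) (auto intro: GM_prob FM_prob)

lemma SP_marg:
  assumes r: "r > 0" and l: "l > 0" and B: "B \<in> sets borel"
  shows "measure (sysPoisson_measure r l) {w \<in> space (sysPoisson_measure r l). w j \<in> B}
       = measure (if j = 0 then FMm r l else GMm r l) B"
proof -
  let ?M = "\<lambda>i. if i = 0 then FMm r l else GMm r l"
  have D: "distr (sysPoisson_measure r l) (?M j) (\<lambda>w. w j) = ?M j"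
    unfolding sysPoisson_measure_def by (rule distr_PiM_component) (auto intro: GM_prob FM_prob r l)
  have m: "(\<lambda>w. w j) \<in> measurable (sysPoisson_measure r l) (?M j)"
    unfolding sysPoisson_measure_def by (rule measurable_component_singleton) simp
  have "measure (?M j) B = measure (distr (sysPoisson_measure r l) (?M j) (\<lambda>w. w j)) B" by (simp only: D)
  also have "\<dots> = measure (sysPoisson_measure r l) ((\<lambda>w. w j) -` B \<inter> space (sysPoisson_measure r l))"
    by (rule measure_distr[OF m]) (use B in simp)
  finally show ?thesis by (simp add: vimage_def Collect_conj_eq Int_commute)
qed

lemma pts_inter: "A \<subseteq> {0<..<1} \<Longrightarrow> sysPoisson_points w \<inter> A = range (\<lambda>i. \<Sum>j\<le>i. w j) \<inter> A"
  unfolding sysPoisson_points_def by auto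

lemma count_event_meas:
  assumes As: "\<forall>A\<in>set As. A \<in> sets borel \<and> A \<subseteq> {0<..<1}"
  shows "{w \<in> space (sysPoisson_measure r l). \<forall>j<length As. card (sysPoisson_points w \<inter> As ! j) = ks ! j}
     \<in> sets (sysPoisson_measure r l)"
proof -
  have [measurable]: "Measurable.pred (sysPoisson_measure r l) (\<lambda>w. card (range (\<lambda>i. \<Sum>j\<le>i. w j) \<inter> As ! j) = ks ! j)"
    if "j < length As" for j
    by (rule card_meas) (use As that in auto)
  have "Measurable.pred (sysPoisson_measure r l) (\<lambda>w. \<forall>j<length As. card (range (\<lambda>i. \<Sum>j\<le>i. w j) \<inter> As ! j) = ks ! j)"
    by measurable
  moreover have "\<And>w. (\<forall>j<length As. card (sysPoisson_points w \<inter> As ! j) = ks ! j)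
      = (\<forall>j<length As. card (range (\<lambda>i. \<Sum>j\<le>i. w j) \<inter> As ! j) = ks ! j)"
    using As by (auto simp: pts_inter)
  ultimately show ?thesis by (simp add: pred_def)
qed

lemma sys_card:
  assumes n: "n \<ge> 1"
  shows "card (systematic_points n u \<inter> A) = card {k \<in> {..<n}. u + real k / real n \<in> A}"
proof -
  have inj: "inj_on (\<lambda>k. u + real k / real n) X" for X using n by (auto simp: inj_on_def)
  have "systematic_points n u \<inter> A = (\<lambda>k. u + real k / real n) ` {k \<in> {..<n}. u + real k / real n \<in> A}"
    unfolding systematic_points_def by auto
  then show ?thesis using card_image[OF inj] by simp
qed

lemma sys_card_real:
  assumes n: "n \<ge> 1"
  shows "real (card (systematic_points n u \<inter> A)) = (\<Sum>k<n. indicator A (u + real k / real n))"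
proof -
  have "(\<Sum>k<n. indicator A (u + real k / real n)) = (\<Sum>k<n. if u + real k / real n \<in> A then 1 else (0::real))"
    by (intro sum.cong) (auto simp: indicator_def)
  also have "\<dots> = (\<Sum>k\<in>{k \<in> {..<n}. u + real k / real n \<in> A}. 1)"
    by (rule sum.inter_filter[symmetric]) simp
  also have "\<dots> = real (card {k \<in> {..<n}. u + real k / real n \<in> A})"
    by simp
  finally show ?thesis using sys_card[OF n] by simp
qed

lemma T_meas:
  assumes n: "n \<ge> 1" and As: "\<forall>A\<in>set As. A \<in> sets borel"
  shows "{u. \<forall>j<length As. card (systematic_points n u \<inter> As ! j) = ks ! j} \<in> sets borel"
proof -
  have [measurable]: "Measurable.pred borel (\<lambda>u. (\<Sum>k<n. indicator (As ! j) (u + real k / real n)) = real (ks ! j))"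
    if "j < length As" for j
  proof -
    have [measurable]: "As ! j \<in> sets borel" using As that by auto
    show ?thesis by measurable
  qed
  have "Measurable.pred borel (\<lambda>u. \<forall>j<length As. (\<Sum>k<n. indicator (As ! j) (u + real k / real n)) = real (ks ! j))"
    by measurable
  moreover have "\<And>u. (\<forall>j<length As. card (systematic_points n u \<inter> As ! j) = ks ! j)
      = (\<forall>j<length As. (\<Sum>k<n. indicator (As ! j) (u + real k / real n)) = real (ks ! j))"
    by (simp add: sys_card_real[OF n, symmetric])
  ultimately show ?thesis by (simp add: pred_def)
qed

lemma frontier_meas:
  "{u. systematic_points n u \<inter> frontier A \<noteq> {}} \<in> sets borel"
proof -
  have [measurable]: "frontier A \<in> sets borel" by (intro borel_closed frontier_closed)
  have "Measurable.pred borel (\<lambda>u. \<exists>k::nat. k < n \<and> u + real k / real n \<in> frontier A)"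
    by measurable
  moreover have "\<And>u. (systematic_points n u \<inter> frontier A \<noteq> {}) = (\<exists>k::nat. k < n \<and> u + real k / real n \<in> frontier A)"
    unfolding systematic_points_def by auto
  ultimately show ?thesis by (simp add: pred_def)
qed

lemma same_side:
  fixes p q :: real
  assumes "dist p q < infdist p (frontier A) \<or> frontier A = {}"
  shows "q \<in> A \<longleftrightarrow> p \<in> A"
proof (rule ccontr)
  assume ne: "\<not> (q \<in> A \<longleftrightarrow> p \<in> A)"
  have "closed_segment p q \<inter> A \<noteq> {}" "closed_segment p q - A \<noteq> {}"
    using ne by (auto intro: ends_in_segment)
  then have "closed_segment p q \<inter> frontier A \<noteq> {}"
    by (intro connected_Int_frontier) auto
  then obtain z where z: "z \<in> closed_segment p q" "z \<in> frontier A" by blast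
  then have "infdist p (frontier A) \<le> dist p z" by (intro infdist_le)
  also have "dist p z \<le> dist p q" using dist_in_closed_segment[OF z(1)] by (simp add: dist_commute)
  finally show False using assms z by auto
qed

lemma partial_dev:
  fixes w :: "nat \<Rightarrow> real" and n :: nat and \<delta> :: real
  assumes n: "n \<ge> 1"
    and hJ: "\<And>j. 1 \<le> j \<Longrightarrow> j \<le> n \<Longrightarrow> \<bar>w j - 1 / real n\<bar> < \<delta> / real n"
  shows "k \<le> n \<Longrightarrow> \<bar>(\<Sum>j\<le>k. w j) - (w 0 + real k / real n)\<bar> \<le> real k * (\<delta> / real n) \<and>
             (k \<ge> 1 \<longrightarrow> \<bar>(\<Sum>j\<le>k. w j) - (w 0 + real k / real n)\<bar> < real k * (\<delta> / real n))"
proof (induction k)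
  case 0 then show ?case by simp
next
  case (Suc k)
  have eq: "(\<Sum>j\<le>Suc k. w j) - (w 0 + real (Suc k) / real n)
      = ((\<Sum>j\<le>k. w j) - (w 0 + real k / real n)) + (w (Suc k) - 1 / real n)"
    using n by (simp add: field_simps)
  have IH: "\<bar>(\<Sum>j\<le>k. w j) - (w 0 + real k / real n)\<bar> \<le> real k * (\<delta> / real n)" using Suc by simp
  have J: "\<bar>w (Suc k) - 1 / real n\<bar> < \<delta> / real n" using hJ[of "Suc k"] Suc.prems by simp
  have "\<bar>(\<Sum>j\<le>Suc k. w j) - (w 0 + real (Suc k) / real n)\<bar> < real (Suc k) * (\<delta> / real n)"
  proof -
    have t: "real (Suc k) * (\<delta> / real n) = real k * (\<delta> / real n) + \<delta> / real n" by (simp add: algebra_simps add_divide_distrib)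
    show ?thesis unfolding eq t
      using IH J abs_triangle_ineq[of "(\<Sum>j\<le>k. w j) - (w 0 + real k / real n)" "w (Suc k) - 1 / real n"]
      by linarith
  qed
  then show ?case by simp
qed

lemma det_count:
  fixes w :: "nat \<Rightarrow> real" and n :: nat and \<delta> :: real and A :: "real set"
  assumes n: "n \<ge> 1" and d1: "\<delta> < 1" and d0: "\<delta> > 0"
    and hx: "\<delta> < w 0" "w 0 < 1 / real n - \<delta>"
    and hJ: "\<And>j. 1 \<le> j \<Longrightarrow> j \<le> n \<Longrightarrow> \<bar>w j - 1 / real n\<bar> < \<delta> / real n"
    and hpos: "\<And>j. j > n \<Longrightarrow> w j \<ge> 0"
    and hA: "A \<subseteq> {0<..<1}"
    and hF: "\<And>k. k < n \<Longrightarrow> frontier A = {} \<or> \<delta> < infdist (w 0 + real k / real n) (frontier A)"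
  shows "card (sysPoisson_points w \<inter> A) = card (systematic_points n (w 0) \<inter> A)"
proof -
  define S where "S = (\<lambda>i. \<Sum>j\<le>i. w j)"
  have nn: "real n \<ge> 1" using n by simp
  have dpos: "\<delta> > 0" by (rule d0)
  have dev: "\<bar>S k - (w 0 + real k / real n)\<bar> < \<delta>" if "k \<le> n" for k
  proof (cases "k = n")
    case True
    then have "\<bar>S k - (w 0 + real k / real n)\<bar> < real n * (\<delta> / real n)"
      using partial_dev[where w=w and n=n and \<delta>=\<delta> and k=k, OF n hJ] n unfolding S_def by simp
    then show ?thesis using nn by simp
  next
    case False
    then have "k < n" using that by simp
    have "\<bar>S k - (w 0 + real k / real n)\<bar> \<le> real k * (\<delta> / real n)"
      using partial_dev[where w=w and n=n and \<delta>=\<delta> and k=k, OF n hJ] that unfolding S_def by simp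
    also have "\<dots> < real n * (\<delta> / real n)"
      using \<open>k < n\<close> dpos nn by (intro mult_strict_right_mono) auto
    finally show ?thesis using nn by simp
  qed
  have wpos: "w j > 0" if "1 \<le> j" "j \<le> n" for j
  proof -
    have "\<delta> / real n < 1 / real n" using d1 nn by (intro divide_strict_right_mono) auto
    then show ?thesis using hJ[OF that] by linarith
  qed
  have Ssuc: "S (Suc i) = S i + w (Suc i)" for i unfolding S_def by simp
  have Smono_ge: "S n \<le> S (n + d)" for d
  proof (induction d)
    case (Suc d)
    then show ?case using hpos[of "Suc (n + d)"] Ssuc[of "n + d"] by simp
  qed simp
  have Sn: "S n > 1"
  proof -
    have "S n > w 0 + 1 - \<delta>" using dev[of n] nn by simp
    then show ?thesis using hx by linarith
  qed
  have big: "S i > 1" if "i \<ge> n" for i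
    using Smono_ge[of "i - n"] that Sn by simp
  have Sin: "0 < S k \<and> S k < 1" if "k < n" for k
  proof -
    have d: "\<bar>S k - (w 0 + real k / real n)\<bar> < \<delta>" using dev that by simp
    have k1: "real k / real n \<le> (real n - 1) / real n"
      using that nn by (intro divide_right_mono) auto
    have k2: "(real n - 1) / real n = 1 - 1 / real n" using nn by (simp add: field_simps)
    have k0: "0 \<le> real k / real n" by simp
    have d1': "S k - (w 0 + real k / real n) < \<delta>" and d2': "w 0 + real k / real n - S k < \<delta>"
      using d by (auto simp: abs_less_iff)
    show ?thesis using d1' d2' k0 k1 k2 hx by linarith
  qed
  have Sstrict: "S i < S (i + Suc d)" if "i + Suc d \<le> n" for i d
    using that
  proof (induction d)
    case 0 then show ?case using wpos[of "Suc i"] Ssuc[of i] by simp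
  next
    case (Suc d)
    then have "S i < S (i + Suc d)" by simp
    moreover have "w (i + Suc (Suc d)) > 0" using Suc.prems by (intro wpos) auto
    ultimately show ?case using Ssuc[of "i + Suc d"] by simp
  qed
  have injS: "inj_on S {..<n}"
  proof (rule inj_onI)
    fix i j assume ij: "i \<in> {..<n}" "j \<in> {..<n}" "S i = S j"
    show "i = j"
    proof (rule ccontr)
      assume "i \<noteq> j"
      then consider "i < j" | "j < i" by linarith
      then show False
      proof cases
        case 1
        then obtain d where "j = i + Suc d" using less_iff_Suc_add by (metis add.commute add_Suc_right)
        then show False using Sstrict[of i d] ij by simp
      next
        case 2
        then obtain d where "i = j + Suc d" using less_iff_Suc_add by (metis add.commute add_Suc_right)
        then show False using Sstrict[of j d] ij by simp
      qed
    qed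
  qed
  have same: "S k \<in> A \<longleftrightarrow> w 0 + real k / real n \<in> A" if "k < n" for k
  proof (rule same_side)
    have "dist (w 0 + real k / real n) (S k) < \<delta>" using dev[of k] that by (simp add: dist_real_def abs_minus_commute)
    then show "dist (w 0 + real k / real n) (S k) < infdist (w 0 + real k / real n) (frontier A) \<or> frontier A = {}"
      using hF[OF that] by auto
  qed
  have "sysPoisson_points w \<inter> A = range S \<inter> A" unfolding S_def using hA by (rule pts_inter)
  also have "range S \<inter> A = S ` {k \<in> {..<n}. S k \<in> A}"
  proof
    show "range S \<inter> A \<subseteq> S ` {k \<in> {..<n}. S k \<in> A}"
    proof
      fix y assume "y \<in> range S \<inter> A"
      then obtain i where i: "y = S i" "S i \<in> A" by auto
      then have "S i < 1" using hA by auto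
      then have "i < n" using big[of i] by (cases "i \<ge> n") auto
      then show "y \<in> S ` {k \<in> {..<n}. S k \<in> A}" using i by auto
    qed
  qed auto
  finally have "card (sysPoisson_points w \<inter> A) = card (S ` {k \<in> {..<n}. S k \<in> A})" by simp
  also have "\<dots> = card {k \<in> {..<n}. S k \<in> A}"
    by (rule card_image) (rule inj_on_subset[OF injS], auto)
  also have "{k \<in> {..<n}. S k \<in> A} = {k \<in> {..<n}. w 0 + real k / real n \<in> A}"
    using same by auto
  also have "card \<dots> = card (systematic_points n (w 0) \<inter> A)" by (rule sys_card[OF n, symmetric])
  finally show ?thesis .
qed

definition Bset :: "nat \<Rightarrow> real set list \<Rightarrow> real \<Rightarrow> real set" where
  "Bset n As \<delta> = {x. \<delta> < x \<and> x < 1 / real n - \<delta> \<and>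
     (\<forall>k<n. \<forall>j<length As. frontier (As ! j) = {} \<or> \<delta> < infdist (x + real k / real n) (frontier (As ! j)))}"

lemma infdist_shift_meas[measurable]: "(\<lambda>x::real. infdist (x + c) F) \<in> borel_measurable borel"
  by (intro borel_measurable_continuous_onI continuous_intros)

lemma Bset_meas[measurable]: "Bset n As \<delta> \<in> sets borel"
proof -
  have "Measurable.pred borel (\<lambda>x. \<delta> < x \<and> x < 1 / real n - \<delta> \<and>
     (\<forall>k<n. \<forall>j<length As. frontier (As ! j) = {} \<or> \<delta> < infdist (x + real k / real n) (frontier (As ! j))))"
    by measurable
  then show ?thesis by (simp add: Bset_def pred_def)
qed

lemma Bset_mono: "\<delta>' \<le> \<delta> \<Longrightarrow> Bset n As \<delta> \<subseteq> Bset n As \<delta>'"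
  unfolding Bset_def by fastforce

lemma ev_small: "c > 0 \<Longrightarrow> eventually (\<lambda>p::nat. 1 / (real p + 2) < c) sequentially"
proof -
  assume c: "c > 0"
  have "eventually (\<lambda>p::nat. 1 / real p < c) sequentially"
    using order_tendstoD(2)[OF lim_1_over_n c] by simp
  moreover have "eventually (\<lambda>p::nat. p \<ge> 1) sequentially" by (rule eventually_ge_at_top)
  ultimately show ?thesis
  proof eventually_elim
    case (elim p)
    have "1 / (real p + 2) \<le> 1 / real p" using elim by (intro divide_left_mono) auto
    then show ?case using elim by linarith
  qed
qed

lemma Bset_good:
  fixes n :: nat and As :: "real set list" and \<epsilon> :: real
  assumes n: "n \<ge> 1" and e: "\<epsilon> > 0"
    and As: "\<forall>A\<in>set As. measure (systematic_measure n) {w \<in> space (systematic_measure n). systematic_points n w \<inter> frontier A \<noteq> {}} = 0"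
  shows "\<exists>\<delta>. 0 < \<delta> \<and> \<delta> < 1 \<and> measure (systematic_measure n) (Bset n As \<delta>) > 1 - \<epsilon>"
proof -
  let ?\<nu> = "systematic_measure n"
  have nn: "real n \<ge> 1" using n by simp
  have emI: "emeasure lborel {0<..<1 / real n} = ennreal (1 / real n)" using nn by simp
  interpret prob_space ?\<nu>
    unfolding systematic_measure_def by (rule prob_space_uniform_measure) (use nn emI in auto)
  have sp: "space ?\<nu> = UNIV" by (simp add: systematic_measure_def)
  have sets\<nu>: "sets ?\<nu> = sets borel" by (simp add: systematic_measure_def)
  define Bp where "Bp = (\<lambda>p::nat. Bset n As (1 / (real p + 2)))"
  have inc: "incseq Bp" unfolding Bp_def
    by (intro monoI Bset_mono) (auto intro!: divide_left_mono)
  have rng: "range Bp \<subseteq> sets ?\<nu>" unfolding Bp_def sets\<nu> by auto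
  have AE1: "AE x in ?\<nu>. x \<in> {0<..<1 / real n}"
    unfolding systematic_measure_def by (rule AE_uniform_measureI) auto
  have AE2: "AE x in ?\<nu>. \<forall>j\<in>{..<length As}. systematic_points n x \<inter> frontier (As ! j) = {}"
  proof (rule AE_finite_all[THEN iffD2], simp, intro ballI)
    fix j assume "j \<in> {..<length As}"
    then have j: "As ! j \<in> set As" by simp
    have "{w \<in> space ?\<nu>. systematic_points n w \<inter> frontier (As ! j) \<noteq> {}} \<in> null_sets ?\<nu>"
    proof (rule null_setsI)
      show "{w \<in> space ?\<nu>. systematic_points n w \<inter> frontier (As ! j) \<noteq> {}} \<in> sets ?\<nu>"
        unfolding sp sets\<nu> using frontier_meas by simp
      then show "emeasure ?\<nu> {w \<in> space ?\<nu>. systematic_points n w \<inter> frontier (As ! j) \<noteq> {}} = 0"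
        using As j by (simp add: emeasure_eq_measure)
    qed
    from AE_not_in[OF this] show "AE x in ?\<nu>. systematic_points n x \<inter> frontier (As ! j) = {}"
      by (simp add: sp)
  qed
  have "AE x in ?\<nu>. x \<in> (\<Union>p. Bp p)"
    using AE1 AE2
  proof eventually_elim
    case (elim x)
    have c1: "eventually (\<lambda>p. 1 / (real p + 2) < x) sequentially" using elim by (intro ev_small) auto
    have c2: "eventually (\<lambda>p. x < 1 / real n - 1 / (real p + 2)) sequentially"
    proof -
      have "1 / real n - x > 0" using elim by simp
      then have "eventually (\<lambda>p. 1 / (real p + 2) < 1 / real n - x) sequentially" by (rule ev_small)
      then show ?thesis by eventually_elim linarith
    qed
    have c3: "eventually (\<lambda>p. \<forall>k\<in>{..<n}. \<forall>j\<in>{..<length As}. frontier (As ! j) = {} \<or>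
          1 / (real p + 2) < infdist (x + real k / real n) (frontier (As ! j))) sequentially"
    proof (intro eventually_ball_finite ballI finite_lessThan)
      fix k j assume k: "k \<in> {..<n}" and j: "j \<in> {..<length As}"
      show "eventually (\<lambda>p. frontier (As ! j) = {} \<or> 1 / (real p + 2) < infdist (x + real k / real n) (frontier (As ! j))) sequentially"
      proof (cases "frontier (As ! j) = {}")
        case False
        have "x + real k / real n \<in> systematic_points n x" using k unfolding systematic_points_def by auto
        then have notin: "x + real k / real n \<notin> frontier (As ! j)" using elim(2) j by blast
        have "infdist (x + real k / real n) (frontier (As ! j)) \<noteq> 0"
          using in_closed_iff_infdist_zero[OF frontier_closed False] notin by simp
        then have "infdist (x + real k / real n) (frontier (As ! j)) > 0" using infdist_nonneg by (simp add: order_less_le)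
        from ev_small[OF this] show ?thesis by eventually_elim simp
      qed simp
    qed
    from c1 c2 c3 have "eventually (\<lambda>p. x \<in> Bp p) sequentially"
      by eventually_elim (auto simp: Bp_def Bset_def)
    then obtain p where "x \<in> Bp p" using eventually_sequentially by auto
    then show ?case by auto
  qed
  then have "prob (\<Union>p. Bp p) = 1"
    by (subst AE_in_set_eq_1[symmetric]) (use rng in auto)
  moreover have "(\<lambda>p. prob (Bp p)) \<longlonglongrightarrow> prob (\<Union>p. Bp p)"
    by (rule finite_Lim_measure_incseq[OF rng inc])
  ultimately have "eventually (\<lambda>p. prob (Bp p) > 1 - \<epsilon>) sequentially"
    using e by (auto intro: order_tendstoD(1))
  then obtain p where "prob (Bp p) > 1 - \<epsilon>" using eventually_sequentially by auto
  moreover have "0 < 1 / (real p + 2)" "1 / (real p + 2) < 1" by auto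
  ultimately show ?thesis unfolding Bp_def by blast
qed

lemma GM_neg0:
  assumes r: "r > 0" and l: "l > 0"
  shows "measure (GMm r l) {x. x < 0} = 0"
proof -
  have "emeasure (GMm r l) {x. x < 0} = (\<integral>\<^sup>+x. ennreal (gamma_density r l x) * indicator {x. x < 0} x \<partial>lborel)"
    by (rule emeasure_density) auto
  also have "\<dots> = (\<integral>\<^sup>+x. (0::ennreal) \<partial>(lborel::real measure))"
    by (intro nn_integral_cong) (auto simp: indicator_def gd_zero)
  finally show ?thesis by (simp add: measure_def)
qed

lemma main_est:
  fixes n :: nat and As :: "real set list" and ks :: "nat list" and r \<delta> :: real
  assumes n: "n \<ge> 1" and r: "r > 0" and d0: "0 < \<delta>" and d1: "\<delta> < 1"
    and As: "\<forall>A\<in>set As. A \<in> sets borel \<and> A \<subseteq> {0<..<1}"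
  defines "P \<equiv> sysPoisson_measure r (r * real n)"
  defines "T0 \<equiv> {u. \<forall>j<length As. card (systematic_points n u \<inter> As ! j) = ks ! j}"
  shows "\<bar>measure P {w \<in> space P. \<forall>j<length As. card (sysPoisson_points w \<inter> As ! j) = ks ! j}
           - measure (FMm r (r * real n)) (Bset n As \<delta> \<inter> T0)\<bar>
         \<le> (1 - measure (FMm r (r * real n)) (Bset n As \<delta>)) + real n * (1 / (r * (real n)^2 * (\<delta> / real n)^2))"
proof -
  define nn where "nn = real n"
  have nn: "nn \<ge> 1" using n by (simp add: nn_def)
  have l: "r * nn > 0" using r nn by simp
  interpret P: prob_space P unfolding P_def nn_def[symmetric] by (rule SP_prob[OF r l])
  interpret F: prob_space "FMm r (r * nn)" by (rule FM_prob[OF r l])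
  have spP: "space P = UNIV" unfolding P_def by (rule SP_space)
  note SP_comp[of _ r "r * real n", folded P_def, measurable]
  define B where "B = Bset n As \<delta>"
  have Bm[measurable]: "B \<in> sets borel" unfolding B_def by simp
  have T0m[measurable]: "T0 \<in> sets borel" unfolding T0_def by (rule T_meas[OF n]) (use As in auto)
  define S where "S = {w \<in> space P. \<forall>j<length As. card (sysPoisson_points w \<inter> As ! j) = ks ! j}"
  have Sm: "S \<in> sets P" unfolding S_def P_def by (rule count_event_meas[OF As])
  define S0 where "S0 = {w \<in> space P. w 0 \<in> B \<inter> T0}"
  have S0m: "S0 \<in> sets P" unfolding S0_def by measurable
  define Nb where "Nb = {w \<in> space P. w 0 \<in> UNIV - B} \<union> (\<Union>j\<in>{1..n}. {w \<in> space P. w j \<in> {x. \<delta> / nn \<le> \<bar>x - 1 / nn\<bar>}})"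
  have Nbm: "Nb \<in> sets P" unfolding Nb_def by measurable
  have AEpos: "AE w in P. \<forall>j. j > n \<longrightarrow> w j \<ge> 0"
  proof (subst AE_all_countable, intro allI)
    fix j
    show "AE w in P. j > n \<longrightarrow> w j \<ge> 0"
    proof (cases "j > n")
      case True
      then have j0: "j \<noteq> 0" using n by simp
      have "{w \<in> space P. w j \<in> {x. x < 0}} \<in> null_sets P"
      proof (rule null_setsI)
        show "{w \<in> space P. w j \<in> {x. x < 0}} \<in> sets P" by measurable
        have "measure P {w \<in> space P. w j \<in> {x. x < 0}} = measure (GMm r (r * nn)) {x. x < 0}"
          unfolding P_def using SP_marg[OF r l, of "{x. x < 0}" j] j0 by (simp add: nn_def)
        also have "\<dots> = 0" by (rule GM_neg0[OF r l])
        finally show "emeasure P {w \<in> space P. w j \<in> {x. x < 0}} = 0"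
          by (simp add: P.emeasure_eq_measure)
      qed
      from AE_not_in[OF this] show ?thesis by (simp add: spP not_less)
    qed simp
  qed
  have key: "AE w in P. w \<notin> Nb \<longrightarrow> (w \<in> S \<longleftrightarrow> w \<in> S0)"
    using AEpos
  proof eventually_elim
    case (elim w)
    show ?case
    proof
      assume "w \<notin> Nb"
      then have wB: "w 0 \<in> B" and wJ: "\<And>j. 1 \<le> j \<Longrightarrow> j \<le> n \<Longrightarrow> \<bar>w j - 1 / nn\<bar> < \<delta> / nn"
        unfolding Nb_def spP by (auto simp: not_le)
      have eqc: "card (sysPoisson_points w \<inter> As ! j) = card (systematic_points n (w 0) \<inter> As ! j)"
        if j: "j < length As" for j
      proof (rule det_count[OF n d1 d0])
        show "\<delta> < w 0" "w 0 < 1 / real n - \<delta>" using wB unfolding B_def Bset_def by auto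
        show "\<bar>w i - 1 / real n\<bar> < \<delta> / real n" if "1 \<le> i" "i \<le> n" for i using wJ[OF that] by (simp add: nn_def)
        show "w i \<ge> 0" if "i > n" for i using elim that by simp
        show "As ! j \<subseteq> {0<..<1}" using As j by auto
        show "frontier (As ! j) = {} \<or> \<delta> < infdist (w 0 + real k / real n) (frontier (As ! j))" if "k < n" for k
          using wB that j unfolding B_def Bset_def by auto
      qed
      show "w \<in> S \<longleftrightarrow> w \<in> S0"
        unfolding S_def S0_def T0_def using wB eqc spP by auto
    qed
  qed
  have "measure P S \<le> measure P (S0 \<union> Nb)"
  proof (rule P.finite_measure_mono_AE)
    show "AE x in P. x \<in> S \<longrightarrow> x \<in> S0 \<union> Nb" using key by eventually_elim blast
  qed (use S0m Nbm in blast)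
  also have "\<dots> \<le> measure P S0 + measure P Nb" by (rule measure_subadditive[OF S0m Nbm]) (simp_all add: P.emeasure_eq_measure)
  finally have i1: "measure P S \<le> measure P S0 + measure P Nb" .
  have "measure P S0 \<le> measure P (S \<union> Nb)"
  proof (rule P.finite_measure_mono_AE)
    show "AE x in P. x \<in> S0 \<longrightarrow> x \<in> S \<union> Nb" using key by eventually_elim blast
  qed (use Sm Nbm in blast)
  also have "\<dots> \<le> measure P S + measure P Nb" by (rule measure_subadditive[OF Sm Nbm]) (simp_all add: P.emeasure_eq_measure)
  finally have i2: "measure P S0 \<le> measure P S + measure P Nb" .
  have PS0: "measure P S0 = measure (FMm r (r * nn)) (B \<inter> T0)"
    unfolding S0_def P_def nn_def using SP_marg[OF r l, of "B \<inter> T0" 0, unfolded nn_def] by simp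
  have evj: "\<And>j. {w \<in> space P. w j \<in> {x. \<delta> / nn \<le> \<bar>x - 1 / nn\<bar>}} \<in> sets P" by measurable
  have PNb: "measure P Nb \<le> (1 - measure (FMm r (r * nn)) B) + real n * (1 / (r * nn^2 * (\<delta> / nn)^2))"
  proof -
    have "measure P Nb \<le> measure P {w \<in> space P. w 0 \<in> UNIV - B} +
        measure P (\<Union>j\<in>{1..n}. {w \<in> space P. w j \<in> {x. \<delta> / nn \<le> \<bar>x - 1 / nn\<bar>}})"
      unfolding Nb_def by (rule measure_subadditive) (use Nbm in \<open>auto simp: Nb_def P.emeasure_eq_measure\<close>)
    also have "measure P (\<Union>j\<in>{1..n}. {w \<in> space P. w j \<in> {x. \<delta> / nn \<le> \<bar>x - 1 / nn\<bar>}})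
        \<le> (\<Sum>j\<in>{1..n}. measure P {w \<in> space P. w j \<in> {x. \<delta> / nn \<le> \<bar>x - 1 / nn\<bar>}})"
      by (rule P.finite_measure_subadditive_finite) (simp, use evj in blast)
    also have "\<dots> \<le> (\<Sum>j\<in>{1..n}. 1 / (r * nn^2 * (\<delta> / nn)^2))"
    proof (rule sum_mono)
      fix j assume j: "j \<in> {1..n}"
      then have j0: "j \<noteq> 0" by simp
      have "measure P {w \<in> space P. w j \<in> {x. \<delta> / nn \<le> \<bar>x - 1 / nn\<bar>}}
          = measure (GMm r (r * nn)) {x. \<delta> / nn \<le> \<bar>x - 1 / nn\<bar>}"
        unfolding P_def nn_def using SP_marg[OF r l, of "{x. \<delta> / nn \<le> \<bar>x - 1 / nn\<bar>}" j, unfolded nn_def] j0 by simp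
      also have "\<dots> \<le> r / ((r * nn)^2 * (\<delta> / nn)^2)"
      proof (rule GM_meas_le[OF r l])
        show "\<delta> / nn > 0" using d0 nn by simp
        show "{x. \<delta> / nn \<le> \<bar>x - 1 / nn\<bar>} \<subseteq> {x. \<delta> / nn \<le> \<bar>x - r / (r * nn)\<bar>}" using r by auto
      qed auto
      also have "\<dots> = 1 / (r * nn^2 * (\<delta> / nn)^2)" by (rule cheb_arith[OF r])
      finally show "measure P {w \<in> space P. w j \<in> {x. \<delta> / nn \<le> \<bar>x - 1 / nn\<bar>}} \<le> 1 / (r * nn^2 * (\<delta> / nn)^2)" .
    qed
    also have "\<dots> = real n * (1 / (r * nn^2 * (\<delta> / nn)^2))" by simp
    also have "measure P {w \<in> space P. w 0 \<in> UNIV - B} = 1 - measure (FMm r (r * nn)) B"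
    proof -
      have "measure P {w \<in> space P. w 0 \<in> UNIV - B} = measure (FMm r (r * nn)) (UNIV - B)"
        unfolding P_def nn_def using SP_marg[OF r l, of "UNIV - B" 0, unfolded nn_def] by simp
      also have "\<dots> = 1 - measure (FMm r (r * nn)) B"
        using F.prob_compl[of B] by simp
      finally show ?thesis .
    qed
    finally show ?thesis by simp
  qed
  have "\<bar>measure P S - measure (FMm r (r * nn)) (B \<inter> T0)\<bar> \<le> measure P Nb"
    using i1 i2 PS0 by linarith
  then show ?thesis using PNb unfolding S_def B_def nn_def by linarith
qed

theorem proposition5:
  fixes n :: nat
  assumes "n \<ge> 1"
  shows "pp_weak_conv at_top
           (\<lambda>r::real. sysPoisson_measure r (r * real n)) (\<lambda>r. sysPoisson_points)
           (systematic_measure n) (systematic_points n)"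
  unfolding pp_weak_conv_def
proof (intro allI impI)
  fix As :: "real set list" and ks :: "nat list"
  assume len: "length ks = length As"
  assume hyp: "\<forall>A\<in>set As. A \<in> sets borel \<and> A \<subseteq> {0<..<1} \<and>
      measure (systematic_measure n) {w \<in> space (systematic_measure n). systematic_points n w \<inter> frontier A \<noteq> {}} = 0"
  have n: "n \<ge> 1" by (rule assms)
  define nn where "nn = real n"
  have nn: "nn \<ge> 1" using n by (simp add: nn_def)
  let ?\<nu> = "systematic_measure n"
  have emI: "emeasure lborel {0<..<1 / real n} = ennreal (1 / real n)" using nn by (simp add: nn_def)
  interpret V: prob_space ?\<nu>
    unfolding systematic_measure_def by (rule prob_space_uniform_measure) (use nn emI in \<open>auto simp: nn_def\<close>)
  have spL: "space ?\<nu> = UNIV" by (simp add: systematic_measure_def)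
  have setsL: "sets ?\<nu> = sets borel" by (simp add: systematic_measure_def)
  define T0 where "T0 = {u. \<forall>j<length As. card (systematic_points n u \<inter> As ! j) = ks ! j}"
  have As: "\<forall>A\<in>set As. A \<in> sets borel \<and> A \<subseteq> {0<..<1}" using hyp by blast
  have T0m: "T0 \<in> sets borel" unfolding T0_def by (rule T_meas[OF n]) (use As in auto)
  have RHS: "measure ?\<nu> {w \<in> space ?\<nu>. \<forall>j<length As. card (systematic_points n w \<inter> As ! j) = ks ! j} = measure ?\<nu> T0"
    unfolding T0_def spL by simp
  define a where "a = (\<lambda>r. measure (sysPoisson_measure r (r * real n))
      {w \<in> space (sysPoisson_measure r (r * real n)). \<forall>j<length As. card (sysPoisson_points w \<inter> As ! j) = ks ! j})"
  show "(a \<longlongrightarrow> measure ?\<nu> {w \<in> space ?\<nu>. \<forall>j<length As. card (systematic_points n w \<inter> As ! j) = ks ! j}) at_top"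
    unfolding RHS
  proof (rule tendstoI)
    fix e :: real assume e: "e > 0"
    define \<epsilon> where "\<epsilon> = e / 6"
    have eps: "\<epsilon> > 0" using e by (simp add: \<epsilon>_def)
    obtain \<delta> where d0: "0 < \<delta>" and d1: "\<delta> < 1" and Bbig: "measure ?\<nu> (Bset n As \<delta>) > 1 - \<epsilon>"
      using Bset_good[OF n eps] hyp by blast
    define B where "B = Bset n As \<delta>"
    have Bm: "B \<in> sets borel" unfolding B_def by simp
    have nu_eq: "systematic_measure n = uniform_measure lborel {0<..<1 / nn}"
      by (simp add: systematic_measure_def nn_def)
    have nnpos: "nn > 0" using nn by simp
    have L1: "((\<lambda>r. measure (FMm r (r * nn)) B) \<longlongrightarrow> measure ?\<nu> B) at_top"
      unfolding nu_eq by (rule forG_conv[OF nnpos Bm])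
    have L2: "((\<lambda>r. measure (FMm r (r * nn)) (B \<inter> T0)) \<longlongrightarrow> measure ?\<nu> (B \<inter> T0)) at_top"
      unfolding nu_eq by (rule forG_conv[OF nnpos]) (use Bm T0m in auto)
    define c where "c = nn^2 * (\<delta> / nn)^2"
    have c: "c > 0" using d0 nn by (simp add: c_def)
    have L3: "((\<lambda>r. real n * (1 / (r * c))) \<longlongrightarrow> real n * 0) at_top"
      by (rule tendsto_mult_left[OF inv_lim[OF c]])
    have E1: "eventually (\<lambda>r. dist (measure (FMm r (r * nn)) B) (measure ?\<nu> B) < \<epsilon>) at_top"
      using tendstoD[OF L1 eps] .
    have E2: "eventually (\<lambda>r. dist (measure (FMm r (r * nn)) (B \<inter> T0)) (measure ?\<nu> (B \<inter> T0)) < \<epsilon>) at_top"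
      using tendstoD[OF L2 eps] .
    have E3: "eventually (\<lambda>r. dist (real n * (1 / (r * c))) (real n * 0) < \<epsilon>) at_top"
      using tendstoD[OF L3 eps] .
    have nuT: "measure ?\<nu> T0 \<le> measure ?\<nu> (B \<inter> T0) + (1 - measure ?\<nu> B)"
    proof -
      have "measure ?\<nu> T0 \<le> measure ?\<nu> ((B \<inter> T0) \<union> (space ?\<nu> - B))"
        by (rule V.finite_measure_mono) (use Bm T0m setsL spL in auto)
      also have "\<dots> \<le> measure ?\<nu> (B \<inter> T0) + measure ?\<nu> (space ?\<nu> - B)"
        by (rule measure_subadditive) (use Bm T0m setsL in \<open>auto simp: V.emeasure_eq_measure\<close>)
      also have "measure ?\<nu> (space ?\<nu> - B) = 1 - measure ?\<nu> B"
        by (rule V.prob_compl) (use Bm setsL in auto)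
      finally show ?thesis .
    qed
    have nuT2: "measure ?\<nu> (B \<inter> T0) \<le> measure ?\<nu> T0"
      by (rule V.finite_measure_mono) (use T0m setsL in auto)
    show "eventually (\<lambda>r. dist (a r) (measure ?\<nu> T0) < e) at_top"
      using E1 E2 E3 eventually_gt_at_top[of 0]
    proof eventually_elim
      case (elim r)
      have M: "\<bar>a r - measure (FMm r (r * nn)) (B \<inter> T0)\<bar>
         \<le> (1 - measure (FMm r (r * nn)) B) + real n * (1 / (r * c))"
        using main_est[OF n elim(4) d0 d1 As, of ks] unfolding a_def B_def c_def T0_def nn_def
        by (simp add: mult.assoc)
      have rc: "r * c > 0" using elim(4) c by simp
      have b3: "real n * (1 / (r * c)) < \<epsilon>" using elim(3) rc by (simp add: dist_real_def)
      have b1: "\<bar>measure (FMm r (r * nn)) B - measure ?\<nu> B\<bar> < \<epsilon>" using elim(1) by (simp add: dist_real_def)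
      have b2: "\<bar>measure (FMm r (r * nn)) (B \<inter> T0) - measure ?\<nu> (B \<inter> T0)\<bar> < \<epsilon>" using elim(2) by (simp add: dist_real_def)
      have Bb: "measure ?\<nu> B > 1 - \<epsilon>" using Bbig unfolding B_def .
      have "\<bar>a r - measure ?\<nu> T0\<bar> < 6 * \<epsilon>"
        using M b1 b2 b3 Bb nuT nuT2 eps by (simp add: abs_less_iff abs_le_iff)
      then show ?case by (simp add: dist_real_def \<epsilon>_def)
    qed
  qed
qed


end
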